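(* Let $0\le k<m\le n-1$. Let $U$ be an $(m+1)$-block of $\Lambda_N^n$, let $U_1,U_2\subset U$ be two disjoint $m$-blocks, and let $U_1'\subset U_1$ and $U_2'\subset U_2$ be $k$-blocks. Let $\sigma\in\{-1,+1\}^{\Lambda_N^n}$, let $\varphi:U_1'\to U_2'$ be a bijection with $d(\varphi(x),\varphi(y))=d(x,y)$, and define $\sigma'$ by $\sigma'(v)=\sigma(v)$ for $v\notin U_1'\cup U_2'$, $\sigma'(v)=\sigma(\varphi(v))$ for $v\in U_1'$, $\sigma'(v)=\sigma(\varphi^{-1}(v))$ for $v\in U_2'$. For $k+1\le i\le m$ let $A_i=\{x\in U_1:\sigma(x)=-1,\ d(x,U_1')=i\}$ and $C_i=\{x\in U_2:\sigma(x)=-1,\ d(x,U_2')=i\}$. Then $$\mathcal H(\sigma')-\mathcal H(\sigma)=\sum_{i=k+1}^m2\,(J_i-J_{m+1})\,\big(|A_i|-|C_i|\big)\,\big(|U_2'\cap\sigma|-|U_1'\cap\sigma|\big),$$ where $|U_j'\cap\sigma|$ is the number of $v\in U_j'$ with $\sigma(v)=+1$.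
   Context: Hierarchical lattice $\Lambda_N^n=\{1,\dots,N^n\}$ ($N\ge2$); for $0\le k\le n$ the $k$-blocks are the sets $\{jN^k+1,\dots,(j+1)N^k\}$, $0\le j<N^{n-k}$; $d(a,b)$ is the smallest $k\ge0$ such that $a,b$ lie in a common $k$-block. For $x\notin U_1'$ with $x\in U_1$, all $v\in U_1'$ have the same distance to $x$, denoted $d(x,U_1')$ (similarly for $U_2'$). Hamiltonian with $h>0$, $J_1,\dots,J_n>0$: $\mathcal H(\sigma)=-\frac12\sum_{\{v,w\},v\ne w}J_{d(v,w)}\sigma(v)\sigma(w)-\frac h2\sum_v\sigma(v)$, the first sum over unordered pairs of distinct vertices. *)

theory Defs
  imports Complex_Main
begin

definition lattice :: "nat \<Rightarrow> nat \<Rightarrow> nat set" where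
  "lattice N n = {1..N^n}"

definition is_block :: "nat \<Rightarrow> nat \<Rightarrow> nat \<Rightarrow> nat set \<Rightarrow> bool" where
  "is_block N n k B \<longleftrightarrow> k \<le> n \<and> (\<exists>j < N^(n-k). B = {j * N^k + 1 .. (j+1) * N^k})"

definition hdist :: "nat \<Rightarrow> nat \<Rightarrow> nat \<Rightarrow> nat \<Rightarrow> nat" where
  "hdist N n a b = (LEAST k. \<exists>B. is_block N n k B \<and> a \<in> B \<and> b \<in> B)"

definition hamiltonian :: "nat \<Rightarrow> nat \<Rightarrow> (nat \<Rightarrow> real) \<Rightarrow> real \<Rightarrow> (nat \<Rightarrow> int) \<Rightarrow> real" where
  "hamiltonian N n J h \<sigma> =
     - (1/2) * (\<Sum>p \<in> {(v, w). v \<in> lattice N n \<and> w \<in> lattice N n \<and> v < w}.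
                  J (hdist N n (fst p) (snd p)) * of_int (\<sigma> (fst p)) * of_int (\<sigma> (snd p)))
     - (h/2) * (\<Sum>v \<in> lattice N n. of_int (\<sigma> v))"

end

theory Submission
  imports Defs
begin


lemma div_eq_iff_nat: "0 < (d::nat) \<Longrightarrow> (x div d = j) \<longleftrightarrow> (j*d \<le> x \<and> x < (j+1)*d)"
  by (metis Suc_eq_plus1 div_less_iff_less_mult div_times_less_eq_dividend
    le_less_Suc_eq less_eq_div_iff_mult_less_eq)

lemma interval_iff: "0 < (d::nat) \<Longrightarrow> v \<in> {j*d+1..(j+1)*d} \<longleftrightarrow> 1 \<le> v \<and> (v-1) div d = j"
  by (cases v) (auto simp: div_eq_iff_nat)

lemma block_char:
  assumes "is_block N n k B" "N > 0"
  obtains j where "k \<le> n" "j < N^(n-k)" "\<And>v. v \<in> B \<longleftrightarrow> 1 \<le> v \<and> (v-1) div N^k = j"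
proof -
  from assms obtain j where j: "k \<le> n" "j < N^(n-k)" "B = {j * N^k + 1 .. (j+1) * N^k}"
    unfolding is_block_def by blast
  have "v \<in> B \<longleftrightarrow> 1 \<le> v \<and> (v-1) div N^k = j" for v
  proof -
    have p: "0 < N^k" using assms by simp
    show ?thesis unfolding j(3) by (rule interval_iff[OF p])
  qed
  then show ?thesis using that j by blast
qed

lemma lattice_iff: "v \<in> lattice N n \<longleftrightarrow> 1 \<le> v \<and> v - 1 < N^n"
  unfolding lattice_def by auto

lemma block_sub:
  assumes "is_block N n k B" "N > 0"
  shows "B \<subseteq> lattice N n"
proof
  fix v assume v: "v \<in> B"
  from assms obtain j where j: "k \<le> n" "j < N^(n-k)" "B = {j * N^k + 1 .. (j+1) * N^k}"
    unfolding is_block_def by blast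
  have "(j+1) * N^k \<le> N^(n-k) * N^k" using j(2) by (intro mult_le_mono1) simp
  also have "\<dots> = N^n" using j(1) by (simp add: power_add[symmetric])
  finally show "v \<in> lattice N n" using v j(3) unfolding lattice_def by auto
qed

lemma shares_iff:
  assumes "N > 0" "a \<in> lattice N n" "b \<in> lattice N n"
  shows "(\<exists>B. is_block N n j B \<and> a \<in> B \<and> b \<in> B) \<longleftrightarrow> (j \<le> n \<and> (a-1) div N^j = (b-1) div N^j)"
proof
  assume "\<exists>B. is_block N n j B \<and> a \<in> B \<and> b \<in> B"
  then obtain B where B: "is_block N n j B" "a \<in> B" "b \<in> B" by blast
  from block_char[OF B(1) assms(1)] obtain c where "j \<le> n" "\<And>v. v \<in> B \<longleftrightarrow> 1 \<le> v \<and> (v-1) div N^j = c"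
    by metis
  then show "j \<le> n \<and> (a-1) div N^j = (b-1) div N^j" using B by auto
next
  assume h: "j \<le> n \<and> (a-1) div N^j = (b-1) div N^j"
  define c where "c = (a-1) div N^j"
  have p: "0 < N^j" using assms by simp
  have "a - 1 < N^(n-j) * N^j" using assms(2) h by (simp add: lattice_iff power_add[symmetric])
  then have c: "c < N^(n-j)" unfolding c_def by (simp add: less_mult_imp_div_less)
  have blk: "is_block N n j {c * N^j + 1 .. (c+1) * N^j}" unfolding is_block_def using h c by blast
  have "a \<in> {c * N^j + 1 .. (c+1) * N^j}" "b \<in> {c * N^j + 1 .. (c+1) * N^j}"
    using interval_iff[OF p, of a c] interval_iff[OF p, of b c] assms(2,3) h
    unfolding c_def lattice_iff by auto
  then show "\<exists>B. is_block N n j B \<and> a \<in> B \<and> b \<in> B" using blk by blast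
qed

lemma hdist_eq:
  assumes "N > 0" "a \<in> lattice N n" "b \<in> lattice N n"
  shows "hdist N n a b = (LEAST j. j \<le> n \<and> (a-1) div N^j = (b-1) div N^j)"
  unfolding hdist_def using shares_iff[OF assms] by simp

lemma div_mono_eq:
  assumes "(x::nat) div N^j = y div N^j" "j \<le> j'"
  shows "x div N^j' = y div N^j'"
proof -
  have "N^j' = N^j * N^(j'-j)" using assms(2) by (simp add: power_add[symmetric])
  then show ?thesis using assms(1) by (simp add: div_mult2_eq)
qed

lemma top_eq:
  assumes "a \<in> lattice N n" "b \<in> lattice N n"
  shows "(a-1) div N^n = (b-1) div N^n"
  using assms unfolding lattice_iff by simp

lemma hdist_le_iff:
  assumes "N > 0" "a \<in> lattice N n" "b \<in> lattice N n" "i \<le> n"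
  shows "hdist N n a b \<le> i \<longleftrightarrow> (a-1) div N^i = (b-1) div N^i"
proof -
  let ?P = "\<lambda>j. j \<le> n \<and> (a-1) div N^j = (b-1) div N^j"
  have Pn: "?P n" using top_eq[OF assms(2,3)] by simp
  have h: "hdist N n a b = (LEAST j. ?P j)" by (rule hdist_eq[OF assms(1-3)])
  show ?thesis
  proof
    assume "hdist N n a b \<le> i"
    moreover have "?P (LEAST j. ?P j)" using Pn by (rule LeastI)
    ultimately show "(a-1) div N^i = (b-1) div N^i" using h div_mono_eq by metis
  next
    assume "(a-1) div N^i = (b-1) div N^i"
    then have "?P i" using assms(4) by simp
    then show "hdist N n a b \<le> i" unfolding h by (rule Least_le)
  qed
qed

lemma hdist_cong:
  assumes "N > 0" "a \<in> lattice N n" "b \<in> lattice N n" "a' \<in> lattice N n" "b' \<in> lattice N n"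
    "\<And>j. j \<le> n \<Longrightarrow> ((a-1) div N^j = (b-1) div N^j \<longleftrightarrow> (a'-1) div N^j = (b'-1) div N^j)"
  shows "hdist N n a b = hdist N n a' b'"
  unfolding hdist_eq[OF assms(1-3)] hdist_eq[OF assms(1,4,5)] using assms(6) by metis

lemma hdist_eqI:
  assumes "N > 0" "a \<in> lattice N n" "b \<in> lattice N n" "i \<le> n"
    "(a-1) div N^i = (b-1) div N^i" "\<And>j. j < i \<Longrightarrow> (a-1) div N^j \<noteq> (b-1) div N^j"
  shows "hdist N n a b = i"
  unfolding hdist_eq[OF assms(1-3)]
  by (rule Least_equality) (use assms(4-6) in \<open>auto simp: not_less[symmetric]\<close>)

lemma hdist_sym: "hdist N n a b = hdist N n b a"
  unfolding hdist_def by (simp add: conj_ac)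

lemma card_blk:
  assumes "N > 0" "x \<in> lattice N n" "i \<le> n"
  shows "card {v \<in> lattice N n. (v-1) div N^i = (x-1) div N^i} = N^i"
proof -
  define c where "c = (x-1) div N^i"
  have p: "0 < N^i" using assms by simp
  have "x - 1 < N^(n-i) * N^i" using assms by (simp add: lattice_iff power_add[symmetric])
  then have c: "c < N^(n-i)" unfolding c_def by (simp add: less_mult_imp_div_less)
  have blk: "is_block N n i {c * N^i + 1 .. (c+1) * N^i}" unfolding is_block_def using assms c by blast
  have "{v \<in> lattice N n. (v-1) div N^i = c} = {c * N^i + 1 .. (c+1) * N^i}"
  proof
    show "{v \<in> lattice N n. (v-1) div N^i = c} \<subseteq> {c * N^i + 1 .. (c+1) * N^i}"
      using interval_iff[OF p] unfolding lattice_iff by blast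
    show "{c * N^i + 1 .. (c+1) * N^i} \<subseteq> {v \<in> lattice N n. (v-1) div N^i = c}"
      using block_sub[OF blk assms(1)] interval_iff[OF p] by blast
  qed
  then show ?thesis unfolding c_def by simp
qed

lemma spin_sum:
  assumes "finite S" "\<forall>v\<in>S. \<sigma> v = 1 \<or> \<sigma> v = (-1::int)"
  shows "(\<Sum>v\<in>S. real_of_int (\<sigma> v)) = real (card S) - 2 * real (card {v\<in>S. \<sigma> v = -1})"
    and "(\<Sum>v\<in>S. real_of_int (\<sigma> v)) = 2 * real (card {v\<in>S. \<sigma> v = 1}) - real (card S)"
proof -
  let ?P = "{v\<in>S. \<sigma> v = 1}" and ?Q = "{v\<in>S. \<sigma> v = -1}"
  have S: "S = ?P \<union> ?Q" using assms(2) by auto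
  have d: "?P \<inter> ?Q = {}" by auto
  have f: "finite ?P" "finite ?Q" using assms(1) by auto
  have "(\<Sum>v\<in>S. real_of_int (\<sigma> v)) = (\<Sum>v\<in>?P. real_of_int (\<sigma> v)) + (\<Sum>v\<in>?Q. real_of_int (\<sigma> v))"
    by (subst S) (rule sum.union_disjoint[OF f d])
  also have "\<dots> = real (card ?P) - real (card ?Q)" by simp
  finally have e: "(\<Sum>v\<in>S. real_of_int (\<sigma> v)) = real (card ?P) - real (card ?Q)" .
  have c: "card S = card ?P + card ?Q" by (subst S) (rule card_Un_disjoint[OF f d])
  show "(\<Sum>v\<in>S. real_of_int (\<sigma> v)) = real (card S) - 2 * real (card ?Q)" using e c by simp
  show "(\<Sum>v\<in>S. real_of_int (\<sigma> v)) = 2 * real (card ?P) - real (card S)" using e c by simp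
qed

lemma pair_sum:
  fixes g :: "nat \<Rightarrow> nat \<Rightarrow> real"
  assumes "finite L" "\<And>v w. v \<in> L \<Longrightarrow> w \<in> L \<Longrightarrow> g v w = g w v" "\<And>v. v \<in> L \<Longrightarrow> g v v = 0"
  shows "(\<Sum>p\<in>{(v, w). v \<in> L \<and> w \<in> L \<and> v < w}. g (fst p) (snd p)) = 1/2 * (\<Sum>v\<in>L. \<Sum>w\<in>L. g v w)"
proof -
  let ?A = "{(v, w). v \<in> L \<and> w \<in> L \<and> v < w}" and ?B = "{(v, w). v \<in> L \<and> w \<in> L \<and> w < v}"
    and ?D = "{(v, w). v \<in> L \<and> w \<in> L \<and> v = w}"
  have fin: "finite ?A" "finite ?B" "finite ?D"
    using assms(1) by (auto intro: finite_subset[of _ "L \<times> L"])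
  have LL: "L \<times> L = ?A \<union> ?B \<union> ?D" by auto
  have "(\<Sum>v\<in>L. \<Sum>w\<in>L. g v w) = (\<Sum>p\<in>L \<times> L. g (fst p) (snd p))"
    by (simp add: sum.cartesian_product case_prod_beta)
  also have "\<dots> = (\<Sum>p\<in>?A. g (fst p) (snd p)) + (\<Sum>p\<in>?B. g (fst p) (snd p)) + (\<Sum>p\<in>?D. g (fst p) (snd p))"
    unfolding LL using fin
    by (subst sum.union_disjoint, auto)+
  also have "(\<Sum>p\<in>?D. g (fst p) (snd p)) = 0" using assms(3) by (intro sum.neutral) auto
  also have "(\<Sum>p\<in>?B. g (fst p) (snd p)) = (\<Sum>p\<in>?A. g (fst p) (snd p))"
  proof -
    have bij: "bij_betw prod.swap ?A ?B" by (rule bij_betw_byWitness[where f'=prod.swap]) auto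
    have "(\<Sum>p\<in>?B. g (fst p) (snd p)) = (\<Sum>p\<in>?A. g (fst (prod.swap p)) (snd (prod.swap p)))"
      by (rule sum.reindex_bij_betw[OF bij, symmetric])
    also have "\<dots> = (\<Sum>p\<in>?A. g (fst p) (snd p))" using assms(2) by (intro sum.cong) auto
    finally show ?thesis .
  qed
  finally show ?thesis by simp
qed



lemma latt_ge1: "v \<in> lattice N n \<Longrightarrow> 1 \<le> v" unfolding lattice_def by simp

lemma far_same:
  assumes N0: "N > 0" and mB: "\<And>v. v \<in> B \<longleftrightarrow> 1 \<le> v \<and> (v-1) div N^k = b"
    and v: "v \<in> lattice N n" "v \<notin> B" and xy: "x \<in> B" "y \<in> B" and BL: "B \<subseteq> lattice N n"
  shows "hdist N n v x = hdist N n v y"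
proof (rule hdist_cong[OF N0])
  show "v \<in> lattice N n" "x \<in> lattice N n" "v \<in> lattice N n" "y \<in> lattice N n" using v xy BL by auto
  have bx: "(x-1) div N^k = b" and by': "(y-1) div N^k = b" using mB xy by blast+
  fix j assume "j \<le> n"
  show "((v-1) div N^j = (x-1) div N^j) = ((v-1) div N^j = (y-1) div N^j)"
  proof (cases "k \<le> j")
    case True
    have "(x-1) div N^j = (y-1) div N^j" using div_mono_eq[of "x-1" N k "y-1" j] True bx by' by simp
    then show ?thesis by simp
  next
    case False
    have "(v-1) div N^j \<noteq> (z-1) div N^j" if "z \<in> B" for z
    proof
      assume "(v-1) div N^j = (z-1) div N^j"
      then have "(v-1) div N^k = (z-1) div N^k" using div_mono_eq[of "v-1" N j "z-1" k] False by simp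
      moreover have "(z-1) div N^k = b" using mB that by blast
      moreover have "1 \<le> v" using latt_ge1 v(1) by blast
      ultimately have "v \<in> B" using mB[of v] by simp
      then show False using v by simp
    qed
    then show ?thesis using xy by simp
  qed
qed

lemma far_same2:
  assumes N0: "N > 0" and m1: "\<And>v. v \<in> V1 \<longleftrightarrow> 1 \<le> v \<and> (v-1) div N^m = a1"
    and m2: "\<And>v. v \<in> V2 \<longleftrightarrow> 1 \<le> v \<and> (v-1) div N^m = a2"
    and v: "v \<in> lattice N n" "v \<notin> V1" "v \<notin> V2" and xy: "x \<in> V1" "y \<in> V2"
    and L: "x \<in> lattice N n" "y \<in> lattice N n"
    and up: "(x-1) div N^(m+1) = (y-1) div N^(m+1)"
  shows "hdist N n v x = hdist N n v y"
proof (rule hdist_cong[OF N0])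
  show "v \<in> lattice N n" "x \<in> lattice N n" "v \<in> lattice N n" "y \<in> lattice N n" using v L by auto
  have v1: "1 \<le> v" using latt_ge1 v(1) by blast
  have ax: "(x-1) div N^m = a1" using m1 xy by blast
  have ay: "(y-1) div N^m = a2" using m2 xy by blast
  fix j assume "j \<le> n"
  show "((v-1) div N^j = (x-1) div N^j) = ((v-1) div N^j = (y-1) div N^j)"
  proof (cases "m+1 \<le> j")
    case True
    have "(x-1) div N^j = (y-1) div N^j" using div_mono_eq[of "x-1" N "m+1" "y-1" j] True up by simp
    then show ?thesis by simp
  next
    case False
    have A: "(v-1) div N^j \<noteq> (x-1) div N^j"
    proof
      assume "(v-1) div N^j = (x-1) div N^j"
      then have "(v-1) div N^m = (x-1) div N^m" using div_mono_eq[of "v-1" N j "x-1" m] False by simp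
      then have "v \<in> V1" using m1[of v] v1 ax by simp
      then show False using v by simp
    qed
    have B: "(v-1) div N^j \<noteq> (y-1) div N^j"
    proof
      assume "(v-1) div N^j = (y-1) div N^j"
      then have "(v-1) div N^m = (y-1) div N^m" using div_mono_eq[of "v-1" N j "y-1" m] False by simp
      then have "v \<in> V2" using m2[of v] v1 ay by simp
      then show False using v by simp
    qed
    show ?thesis using A B by simp
  qed
qed

lemma cross:
  assumes N0: "N > 0" and m1: "\<And>v. v \<in> V1 \<longleftrightarrow> 1 \<le> v \<and> (v-1) div N^m = a1"
    and m2: "\<And>v. v \<in> V2 \<longleftrightarrow> 1 \<le> v \<and> (v-1) div N^m = a2" and ne: "a1 \<noteq> a2"
    and xy: "x \<in> V1" "y \<in> V2" and L: "x \<in> lattice N n" "y \<in> lattice N n"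
    and up: "(x-1) div N^(m+1) = (y-1) div N^(m+1)" and mn: "m + 1 \<le> n"
  shows "hdist N n x y = m + 1"
proof (rule hdist_eqI[OF N0 L mn up])
  have ax: "(x-1) div N^m = a1" using m1 xy by blast
  have ay: "(y-1) div N^m = a2" using m2 xy by blast
  fix j assume j: "j < m + 1"
  show "(x-1) div N^j \<noteq> (y-1) div N^j"
  proof
    assume "(x-1) div N^j = (y-1) div N^j"
    then have "(x-1) div N^m = (y-1) div N^m" using div_mono_eq[of "x-1" N j "y-1" m] j by simp
    then show False using ax ay ne by simp
  qed
qed

lemma lev_range:
  assumes N0: "N > 0" and mV: "\<And>v. v \<in> V \<longleftrightarrow> 1 \<le> v \<and> (v-1) div N^m = a"
    and mV': "\<And>v. v \<in> V' \<longleftrightarrow> 1 \<le> v \<and> (v-1) div N^k = b"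
    and sub: "V' \<subseteq> V" "V \<subseteq> lattice N n" and x0: "x0 \<in> V'" and v: "v \<in> V" "v \<notin> V'"
    and mn: "m \<le> n" "k \<le> m"
  shows "k < hdist N n v x0 \<and> hdist N n v x0 \<le> m"
proof -
  have L: "v \<in> lattice N n" "x0 \<in> lattice N n" using sub x0 v by auto
  have v1: "1 \<le> v" using latt_ge1 L(1) by blast
  have x0V: "x0 \<in> V" using sub x0 by blast
  have "(v-1) div N^m = a" "(x0-1) div N^m = a" using mV v x0V by blast+
  then have c1: "hdist N n v x0 \<le> m"
    using hdist_le_iff[OF N0 L mn(1)] by simp
  have c2: "k < hdist N n v x0"
  proof (rule ccontr)
    assume "\<not> k < hdist N n v x0"
    then have "(v-1) div N^k = (x0-1) div N^k" using hdist_le_iff[OF N0 L, of k] mn by simp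
    moreover have "(x0-1) div N^k = b" using mV' x0 by blast
    ultimately have "v \<in> V'" using mV'[of v] v1 by simp
    then show False using v by simp
  qed
  show ?thesis using c1 c2 by simp
qed

lemma lev_card:
  assumes N0: "N > 0" and mV: "\<And>v. v \<in> V \<longleftrightarrow> 1 \<le> v \<and> (v-1) div N^m = a"
    and mV': "\<And>v. v \<in> V' \<longleftrightarrow> 1 \<le> v \<and> (v-1) div N^k = b"
    and sub: "V' \<subseteq> V" "V \<subseteq> lattice N n" and x0: "x0 \<in> V'"
    and mn: "m \<le> n" and i: "k < i" "i \<le> m"
  shows "card {x \<in> V. x \<notin> V' \<and> hdist N n x x0 = i} = N^i - N^(i-1)"
proof -
  define Bl where "Bl j = {v \<in> lattice N n. (v-1) div N^j = (x0-1) div N^j}" for j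
  have x0L: "x0 \<in> lattice N n" using sub x0 by auto
  have x0V: "x0 \<in> V" using sub x0 by blast
  have am: "(x0-1) div N^m = a" using mV x0V by blast
  have bk: "(x0-1) div N^k = b" using mV' x0 by blast
  have eq: "{x \<in> V. x \<notin> V' \<and> hdist N n x x0 = i} = Bl i - Bl (i-1)"
  proof (intro set_eqI iffI)
    fix x assume x: "x \<in> {x \<in> V. x \<notin> V' \<and> hdist N n x x0 = i}"
    then have xL: "x \<in> lattice N n" using sub by auto
    have h: "hdist N n x x0 \<le> i" "\<not> hdist N n x x0 \<le> i - 1" using x i by auto
    have e1: "(x-1) div N^i = (x0-1) div N^i" using h(1) hdist_le_iff[OF N0 xL x0L, of i] i mn by simp
    have e2: "(x-1) div N^(i-1) \<noteq> (x0-1) div N^(i-1)"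
      using h(2) hdist_le_iff[OF N0 xL x0L, of "i-1"] i mn by simp
    show "x \<in> Bl i - Bl (i-1)" using e1 e2 xL unfolding Bl_def by simp
  next
    fix x assume x: "x \<in> Bl i - Bl (i-1)"
    then have xL: "x \<in> lattice N n" and e: "(x-1) div N^i = (x0-1) div N^i"
      and ne: "(x-1) div N^(i-1) \<noteq> (x0-1) div N^(i-1)" unfolding Bl_def by auto
    have x1: "1 \<le> x" using latt_ge1 xL by blast
    have "(x-1) div N^m = (x0-1) div N^m" using div_mono_eq[OF e, of m] i by simp
    then have xV: "x \<in> V" using mV[of x] x1 am by simp
    have xV': "x \<notin> V'"
    proof
      assume "x \<in> V'"
      then have "(x-1) div N^k = (x0-1) div N^k" using mV' bk by blast
      then have "(x-1) div N^(i-1) = (x0-1) div N^(i-1)" using div_mono_eq[of "x-1" N k "x0-1" "i-1"] i by simp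
      then show False using ne by simp
    qed
    have h1: "hdist N n x x0 \<le> i" using hdist_le_iff[OF N0 xL x0L, of i] i mn e by simp
    have h2: "\<not> hdist N n x x0 \<le> i - 1" using hdist_le_iff[OF N0 xL x0L, of "i-1"] i mn ne by simp
    have "hdist N n x x0 = i" using h1 h2 by simp
    then show "x \<in> {x \<in> V. x \<notin> V' \<and> hdist N n x x0 = i}" using xV xV' by simp
  qed
  have fin: "finite (Bl i)" unfolding Bl_def lattice_def by simp
  have ss: "Bl (i-1) \<subseteq> Bl i"
  proof
    fix x assume "x \<in> Bl (i-1)"
    then show "x \<in> Bl i" unfolding Bl_def using div_mono_eq[of "x-1" N "i-1" "x0-1" i] by simp
  qed
  have "card (Bl i - Bl (i-1)) = card (Bl i) - card (Bl (i-1))" by (rule card_Diff_subset[OF finite_subset[OF ss fin] ss])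
  also have "\<dots> = N^i - N^(i-1)" unfolding Bl_def using card_blk[OF N0 x0L] i mn by simp
  finally show ?thesis using eq by simp
qed



lemma T_formula:
  fixes \<sigma> :: "nat \<Rightarrow> int" and J :: "nat \<Rightarrow> real"
  assumes N0: "N > 0" and mV: "\<And>v. v \<in> V \<longleftrightarrow> 1 \<le> v \<and> (v-1) div N^m = a"
    and mV': "\<And>v. v \<in> V' \<longleftrightarrow> 1 \<le> v \<and> (v-1) div N^k = b"
    and sub: "V' \<subseteq> V" "V \<subseteq> lattice N n" and x0: "x0 \<in> V'"
    and mn: "m \<le> n" "k \<le> m" and sp: "\<forall>v\<in>V. \<sigma> v = 1 \<or> \<sigma> v = -1"
  shows "(\<Sum>v\<in>V-V'. real_of_int (\<sigma> v) * (J (hdist N n v x0) - c)) =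
    (\<Sum>i=k+1..m. (J i - c) * (real (N^i - N^(i-1))
       - 2 * real (card {x \<in> V. \<sigma> x = -1 \<and> x \<notin> V' \<and> (\<forall>v \<in> V'. hdist N n x v = i)})))"
proof -
  define D where "D v = hdist N n v x0" for v
  define Lev where "Lev i = {x \<in> V. x \<notin> V' \<and> hdist N n x x0 = i}" for i
  have finV: "finite V" using sub(2) finite_subset unfolding lattice_def by auto
  have img: "D ` (V - V') \<subseteq> {k+1..m}"
  proof
    fix y assume "y \<in> D ` (V - V')"
    then obtain v where v: "v \<in> V" "v \<notin> V'" "y = D v" by auto
    show "y \<in> {k+1..m}" using lev_range[OF N0 mV mV' sub x0 v(1,2) mn] v(3) unfolding D_def by auto
  qed
  have "(\<Sum>v\<in>V-V'. real_of_int (\<sigma> v) * (J (D v) - c)) =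
      (\<Sum>i\<in>{k+1..m}. \<Sum>v\<in>{x. x \<in> V-V' \<and> D x = i}. real_of_int (\<sigma> v) * (J (D v) - c))"
    by (rule sum.group[symmetric]) (use finV img in auto)
  also have "\<dots> = (\<Sum>i\<in>{k+1..m}. (J i - c) * (\<Sum>v\<in>Lev i. real_of_int (\<sigma> v)))"
  proof (rule sum.cong[OF refl])
    fix i assume "i \<in> {k+1..m}"
    have e: "{x. x \<in> V-V' \<and> D x = i} = Lev i" unfolding Lev_def D_def by auto
    show "(\<Sum>v\<in>{x. x \<in> V-V' \<and> D x = i}. real_of_int (\<sigma> v) * (J (D v) - c)) =
        (J i - c) * (\<Sum>v\<in>Lev i. real_of_int (\<sigma> v))"
      unfolding e sum_distrib_left by (rule sum.cong) (auto simp: Lev_def D_def)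
  qed
  also have "\<dots> = (\<Sum>i=k+1..m. (J i - c) * (real (N^i - N^(i-1))
       - 2 * real (card {x \<in> V. \<sigma> x = -1 \<and> x \<notin> V' \<and> (\<forall>v \<in> V'. hdist N n x v = i)})))"
  proof (rule sum.cong[OF refl])
    fix i assume i: "i \<in> {k+1..m}"
    have fin: "finite (Lev i)" using finV unfolding Lev_def by simp
    have spL: "\<forall>v\<in>Lev i. \<sigma> v = 1 \<or> \<sigma> v = -1" using sp unfolding Lev_def by auto
    have cardL: "card (Lev i) = N^i - N^(i-1)" unfolding Lev_def
      by (rule lev_card[OF N0 mV mV' sub x0 mn(1)]) (use i in auto)
    have V'L: "V' \<subseteq> lattice N n" using sub by blast
    have Aeq: "{v \<in> Lev i. \<sigma> v = -1} = {x \<in> V. \<sigma> x = -1 \<and> x \<notin> V' \<and> (\<forall>v \<in> V'. hdist N n x v = i)}"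
    proof (intro set_eqI iffI)
      fix x assume "x \<in> {v \<in> Lev i. \<sigma> v = -1}"
      then have x: "x \<in> V" "x \<notin> V'" "hdist N n x x0 = i" "\<sigma> x = -1" unfolding Lev_def by auto
      have xL: "x \<in> lattice N n" using x(1) sub by blast
      have "\<forall>v\<in>V'. hdist N n x v = i"
        using far_same[OF N0 mV' xL x(2) x0 _ V'L] x(3) by metis
      then show "x \<in> {x \<in> V. \<sigma> x = -1 \<and> x \<notin> V' \<and> (\<forall>v \<in> V'. hdist N n x v = i)}" using x by simp
    next
      fix x assume "x \<in> {x \<in> V. \<sigma> x = -1 \<and> x \<notin> V' \<and> (\<forall>v \<in> V'. hdist N n x v = i)}"
      then show "x \<in> {v \<in> Lev i. \<sigma> v = -1}" using x0 unfolding Lev_def by auto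
    qed
    show "(J i - c) * (\<Sum>v\<in>Lev i. real_of_int (\<sigma> v)) = (J i - c) * (real (N^i - N^(i-1))
       - 2 * real (card {x \<in> V. \<sigma> x = -1 \<and> x \<notin> V' \<and> (\<forall>v \<in> V'. hdist N n x v = i)}))"
      using spin_sum(1)[OF fin spL] cardL Aeq by simp
  qed
  finally show ?thesis unfolding D_def .
qed


theorem lemma2p1:
  fixes N n k m :: nat and J :: "nat \<Rightarrow> real" and h :: real
    and U U1 U2 U1' U2' :: "nat set" and \<sigma> \<sigma>' :: "nat \<Rightarrow> int" and \<phi> :: "nat \<Rightarrow> nat"
  assumes N2: "N \<ge> 2"
    and hpos: "h > 0"
    and Jpos: "\<forall>i \<in> {1..n}. J i > 0"
    and km: "k < m" and mn: "m \<le> n - 1"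
    and U: "is_block N n (m+1) U"
    and U1: "is_block N n m U1" and U1sub: "U1 \<subseteq> U"
    and U2: "is_block N n m U2" and U2sub: "U2 \<subseteq> U"
    and disj: "U1 \<inter> U2 = {}"
    and U1': "is_block N n k U1'" and U1'sub: "U1' \<subseteq> U1"
    and U2': "is_block N n k U2'" and U2'sub: "U2' \<subseteq> U2"
    and spin: "\<forall>v \<in> lattice N n. \<sigma> v = 1 \<or> \<sigma> v = -1"
    and bij: "bij_betw \<phi> U1' U2'"
    and iso: "\<forall>x \<in> U1'. \<forall>y \<in> U1'. hdist N n (\<phi> x) (\<phi> y) = hdist N n x y"
    and s_out: "\<forall>v. v \<notin> U1' \<union> U2' \<longrightarrow> \<sigma>' v = \<sigma> v"
    and s_1: "\<forall>v \<in> U1'. \<sigma>' v = \<sigma> (\<phi> v)"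
    and s_2: "\<forall>v \<in> U2'. \<sigma>' v = \<sigma> (inv_into U1' \<phi> v)"
  shows "hamiltonian N n J h \<sigma>' - hamiltonian N n J h \<sigma> =
    (\<Sum>i = k+1..m.
       2 * (J i - J (m+1))
       * (real (card {x \<in> U1. \<sigma> x = -1 \<and> x \<notin> U1' \<and> (\<forall>v \<in> U1'. hdist N n x v = i)})
          - real (card {x \<in> U2. \<sigma> x = -1 \<and> x \<notin> U2' \<and> (\<forall>v \<in> U2'. hdist N n x v = i)}))
       * (real (card {v \<in> U2'. \<sigma> v = 1}) - real (card {v \<in> U1'. \<sigma> v = 1})))"
proof -
  have N0: "N > 0" using N2 by simp
  define L where "L = lattice N n"
  have finL: "finite L" unfolding L_def lattice_def by simp
  have mn1: "m + 1 \<le> n" using km mn by simp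
  have mnn: "m \<le> n" "k \<le> m" using mn1 km by simp_all
  obtain u where mU: "\<And>v. v \<in> U \<longleftrightarrow> 1 \<le> v \<and> (v-1) div N^(m+1) = u"
    using block_char[OF U N0] by metis
  obtain a1 where mU1: "\<And>v. v \<in> U1 \<longleftrightarrow> 1 \<le> v \<and> (v-1) div N^m = a1"
    using block_char[OF U1 N0] by metis
  obtain a2 where mU2: "\<And>v. v \<in> U2 \<longleftrightarrow> 1 \<le> v \<and> (v-1) div N^m = a2"
    using block_char[OF U2 N0] by metis
  obtain b1 where mU1': "\<And>v. v \<in> U1' \<longleftrightarrow> 1 \<le> v \<and> (v-1) div N^k = b1"
    using block_char[OF U1' N0] by metis
  obtain b2 where mU2': "\<And>v. v \<in> U2' \<longleftrightarrow> 1 \<le> v \<and> (v-1) div N^k = b2"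
    using block_char[OF U2' N0] by metis
  have U1L: "U1 \<subseteq> L" using block_sub[OF U1 N0] unfolding L_def .
  have U2L: "U2 \<subseteq> L" using block_sub[OF U2 N0] unfolding L_def .
  have U1'L: "U1' \<subseteq> L" using U1'sub U1L by blast
  have U2'L: "U2' \<subseteq> L" using U2'sub U2L by blast
  have "b1 * N^k + 1 \<in> U1'" using mU1' N0 by simp
  then obtain x1 where x1: "x1 \<in> U1'" by blast
  have "b2 * N^k + 1 \<in> U2'" using mU2' N0 by simp
  then obtain x2 where x2: "x2 \<in> U2'" by blast
  have dW: "U1' \<inter> U2' = {}" using disj U1'sub U2'sub by blast
  have ne12: "a1 \<noteq> a2"
  proof
    assume "a1 = a2"
    then have "x1 \<in> U2" using mU1 mU2 x1 U1'sub by blast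
    then show False using disj x1 U1'sub by blast
  qed
  have upx: "(x-1) div N^(m+1) = (y-1) div N^(m+1)" if "x \<in> U1" "y \<in> U2" for x y
  proof -
    have "x \<in> U" "y \<in> U" using that U1sub U2sub by blast+
    then show ?thesis using mU by metis
  qed
  have crossD: "hdist N n x y = m+1" if "x \<in> U1" "y \<in> U2" for x y
    using cross[OF N0 mU1 mU2 ne12 that _ _ upx[OF that] mn1] U1L U2L that unfolding L_def by blast
  have far1: "hdist N n v x = hdist N n v y" if "v \<in> L" "v \<notin> U1'" "x \<in> U1'" "y \<in> U1'" for v x y
    using far_same[OF N0 mU1' _ that(2-4)] that(1) U1'L unfolding L_def by blast
  have far2: "hdist N n v x = hdist N n v y" if "v \<in> L" "v \<notin> U2'" "x \<in> U2'" "y \<in> U2'" for v x y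
    using far_same[OF N0 mU2' _ that(2-4)] that(1) U2'L unfolding L_def by blast
  have far12: "hdist N n v x = hdist N n v y" if "v \<in> L" "v \<notin> U1" "v \<notin> U2" "x \<in> U1" "y \<in> U2" for v x y
    using far_same2[OF N0 mU1 mU2 _ that(2-5) _ _ upx[OF that(4,5)]] that U1L U2L unfolding L_def by blast

  define W where "W = U1' \<union> U2'"
  define Ob where "Ob = L - W"
  define sg where "sg v = real_of_int (\<sigma> v)" for v
  define sg' where "sg' v = real_of_int (\<sigma>' v)" for v
  define S1 where "S1 = (\<Sum>v\<in>U1'. sg v)"
  define S2 where "S2 = (\<Sum>v\<in>U2'. sg v)"
  define g where "g v w = J (hdist N n v w) * sg' v * sg' w - J (hdist N n v w) * sg v * sg w" for v w
  define D1 where "D1 v = hdist N n v x1" for v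
  define D2 where "D2 v = hdist N n v x2" for v
  define \<pi> where "\<pi> v = (if v \<in> U1' then \<phi> v else inv_into U1' \<phi> v)" for v

  have finW: "finite W" "finite Ob" "finite U1'" "finite U2'"
    using finL U1'L U2'L unfolding W_def Ob_def by (auto intro: finite_subset)
  have WL: "W \<subseteq> L" using U1'L U2'L unfolding W_def by blast
  have LWO: "L = W \<union> Ob" "W \<inter> Ob = {}" using WL unfolding Ob_def by auto
  have sumLW: "sum f L = sum f W + sum f Ob" for f :: "nat \<Rightarrow> real"
    using LWO finW by (metis sum.union_disjoint)
  have sumW: "sum f W = sum f U1' + sum f U2'" for f :: "nat \<Rightarrow> real"
    unfolding W_def using finW dW by (simp add: sum.union_disjoint)

  have inj: "inj_on \<phi> U1'" using bij bij_betw_def by blast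
  have phi_in: "\<phi> x \<in> U2'" if "x \<in> U1'" for x using bij that bij_betwE by blast
  have bij_inv: "bij_betw (inv_into U1' \<phi>) U2' U1'" by (rule bij_betw_inv_into[OF bij])
  have inv_in: "inv_into U1' \<phi> y \<in> U1'" if "y \<in> U2'" for y using bij_inv that bij_betwE by blast
  have inv_phi: "inv_into U1' \<phi> (\<phi> x) = x" if "x \<in> U1'" for x using inv_into_f_f[OF inj that] .
  have phi_inv: "\<phi> (inv_into U1' \<phi> y) = y" if "y \<in> U2'" for y
    using f_inv_into_f[of y \<phi> U1'] that bij_betw_imp_surj_on[OF bij] by blast

  have spinL: "\<forall>v\<in>L. \<sigma> v = 1 \<or> \<sigma> v = -1" using spin unfolding L_def .
  have spin': "\<forall>v\<in>L. \<sigma>' v = 1 \<or> \<sigma>' v = -1"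
  proof
    fix v assume v: "v \<in> L"
    show "\<sigma>' v = 1 \<or> \<sigma>' v = -1"
    proof (cases "v \<in> U1'")
      case True then show ?thesis using s_1 phi_in spinL U2'L by (metis subsetD)
    next
      case False
      show ?thesis
      proof (cases "v \<in> U2'")
        case True then show ?thesis using s_2 inv_in spinL U1'L by (metis subsetD)
      next
        case False2: False
        then show ?thesis using s_out False spinL v by auto
      qed
    qed
  qed

  have sumU1': "(\<Sum>w\<in>U1'. sg' w) = S2"
  proof -
    have "(\<Sum>w\<in>U1'. sg' w) = (\<Sum>w\<in>U1'. sg (\<phi> w))" unfolding sg_def sg'_def using s_1 by simp
    also have "\<dots> = S2" unfolding S2_def by (rule sum.reindex_bij_betw[OF bij])
    finally show ?thesis .
  qed
  have sumU2': "(\<Sum>w\<in>U2'. sg' w) = S1"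
  proof -
    have "(\<Sum>w\<in>U2'. sg' w) = (\<Sum>w\<in>U2'. sg (inv_into U1' \<phi> w))" unfolding sg_def sg'_def using s_2 by simp
    also have "\<dots> = S1" unfolding S1_def by (rule sum.reindex_bij_betw[OF bij_inv])
    finally show ?thesis .
  qed
  have outO: "sg' v = sg v" if "v \<in> Ob" for v using that s_out unfolding Ob_def W_def sg_def sg'_def by auto

  have fld: "(\<Sum>v\<in>L. sg' v) = (\<Sum>v\<in>L. sg v)"
    unfolding sumLW sumW sumU1' sumU2' S1_def S2_def using outO by simp

  define P where "P = {(v, w). v \<in> L \<and> w \<in> L \<and> v < w}"
  have Hd: "hamiltonian N n J h \<sigma>' - hamiltonian N n J h \<sigma> =
      -1/2 * (\<Sum>p\<in>P. g (fst p) (snd p)) - h/2 * ((\<Sum>v\<in>L. sg' v) - (\<Sum>v\<in>L. sg v))"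
    unfolding hamiltonian_def g_def sg_def sg'_def L_def[symmetric] P_def[symmetric]
    by (simp add: sum_subtractf algebra_simps)
  have gsym: "g v w = g w v" if "v \<in> L" "w \<in> L" for v w
    unfolding g_def by (simp add: hdist_sym[of N n v w])
  have gdiag: "g v v = 0" if "v \<in> L" for v
  proof -
    have a: "\<sigma> v = 1 \<or> \<sigma> v = -1" "\<sigma>' v = 1 \<or> \<sigma>' v = -1" using spinL spin' that by auto
    show ?thesis unfolding g_def sg_def sg'_def using a by (elim disjE) simp_all
  qed
  have PS: "(\<Sum>p\<in>P. g (fst p) (snd p)) = 1/2 * (\<Sum>v\<in>L. \<Sum>w\<in>L. g v w)"
    unfolding P_def by (rule pair_sum[OF finL gsym gdiag])
  have split4: "(\<Sum>v\<in>L. \<Sum>w\<in>L. g v w) = (\<Sum>v\<in>W. \<Sum>w\<in>W. g v w) + (\<Sum>v\<in>W. \<Sum>w\<in>Ob. g v w)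
      + (\<Sum>v\<in>Ob. \<Sum>w\<in>W. g v w) + (\<Sum>v\<in>Ob. \<Sum>w\<in>Ob. g v w)"
    by (simp add: sumLW sum.distrib)
  have OO: "(\<Sum>v\<in>Ob. \<Sum>w\<in>Ob. g v w) = 0"
    by (intro sum.neutral ballI) (simp add: g_def outO)
  have WO: "(\<Sum>v\<in>W. \<Sum>w\<in>Ob. g v w) = (\<Sum>v\<in>Ob. \<Sum>w\<in>W. g v w)"
  proof -
    have "(\<Sum>v\<in>W. \<Sum>w\<in>Ob. g v w) = (\<Sum>w\<in>Ob. \<Sum>v\<in>W. g v w)" by (rule sum.swap)
    also have "\<dots> = (\<Sum>v\<in>Ob. \<Sum>w\<in>W. g v w)"
      using gsym WL unfolding Ob_def by (intro sum.cong refl) blast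
    finally show ?thesis .
  qed

  have piW: "\<pi> v \<in> W" if "v \<in> W" for v
    using that phi_in inv_in unfolding \<pi>_def W_def by auto
  have pipi: "\<pi> (\<pi> v) = v" if "v \<in> W" for v
  proof (cases "v \<in> U1'")
    case True
    then have "\<phi> v \<notin> U1'" using phi_in dW by blast
    then show ?thesis using True inv_phi unfolding \<pi>_def by simp
  next
    case False
    then have v2: "v \<in> U2'" using that unfolding W_def by blast
    then show ?thesis using False inv_in phi_inv unfolding \<pi>_def by simp
  qed
  have bijpi: "bij_betw \<pi> W W"
    by (rule bij_betw_byWitness[where f'=\<pi>]) (use piW pipi in auto)
  have sg'pi: "sg' v = sg (\<pi> v)" if "v \<in> W" for v
  proof (cases "v \<in> U1'")
    case True then show ?thesis using s_1 unfolding sg_def sg'_def \<pi>_def by simp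
  next
    case False
    then have "v \<in> U2'" using that unfolding W_def by blast
    then show ?thesis using False s_2 unfolding sg_def sg'_def \<pi>_def by simp
  qed
  have dpi: "hdist N n (\<pi> v) (\<pi> w) = hdist N n v w" if "v \<in> W" "w \<in> W" for v w
  proof -
    have c11: ?thesis if "v \<in> U1'" "w \<in> U1'" using that iso unfolding \<pi>_def by simp
    have c22: ?thesis if "v \<in> U2'" "w \<in> U2'"
    proof -
      have "v \<notin> U1'" "w \<notin> U1'" using that dW by blast+
      then have "hdist N n (\<pi> v) (\<pi> w) = hdist N n (inv_into U1' \<phi> v) (inv_into U1' \<phi> w)" unfolding \<pi>_def by simp
      also have "\<dots> = hdist N n (\<phi> (inv_into U1' \<phi> v)) (\<phi> (inv_into U1' \<phi> w))"
        using iso inv_in that by simp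
      also have "\<dots> = hdist N n v w" using phi_inv that by simp
      finally show ?thesis .
    qed
    have c12: ?thesis if "v \<in> U1'" "w \<in> U2'"
    proof -
      have "w \<notin> U1'" using that dW by blast
      then have "\<pi> v \<in> U2" "\<pi> w \<in> U1" using that phi_in inv_in U1'sub U2'sub unfolding \<pi>_def by auto
      then have "hdist N n (\<pi> v) (\<pi> w) = m + 1" using crossD hdist_sym by metis
      moreover have "hdist N n v w = m + 1" using crossD that U1'sub U2'sub by blast
      ultimately show ?thesis by simp
    qed
    have c21: ?thesis if "v \<in> U2'" "w \<in> U1'"
    proof -
      have "v \<notin> U1'" using that dW by blast
      then have "\<pi> v \<in> U1" "\<pi> w \<in> U2" using that phi_in inv_in U1'sub U2'sub unfolding \<pi>_def by auto
      then have "hdist N n (\<pi> v) (\<pi> w) = m + 1" using crossD by metis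
      moreover have "hdist N n v w = m + 1" using crossD that U1'sub U2'sub hdist_sym by (metis subsetD)
      ultimately show ?thesis by simp
    qed
    show ?thesis using that c11 c22 c12 c21 unfolding W_def by blast
  qed
  have WWsum: "(\<Sum>v\<in>W. \<Sum>w\<in>W. J (hdist N n v w) * sg' v * sg' w) = (\<Sum>v\<in>W. \<Sum>w\<in>W. J (hdist N n v w) * sg v * sg w)"
  proof -
    have "(\<Sum>v\<in>W. \<Sum>w\<in>W. J (hdist N n v w) * sg' v * sg' w) =
        (\<Sum>v\<in>W. \<Sum>w\<in>W. J (hdist N n (\<pi> v) (\<pi> w)) * sg (\<pi> v) * sg (\<pi> w))"
      using dpi sg'pi by simp
    also have "\<dots> = (\<Sum>v\<in>W. \<Sum>w\<in>W. J (hdist N n (\<pi> v) w) * sg (\<pi> v) * sg w)"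
      by (rule sum.cong[OF refl], rule sum.reindex_bij_betw[OF bijpi])
    also have "\<dots> = (\<Sum>v\<in>W. \<Sum>w\<in>W. J (hdist N n v w) * sg v * sg w)"
      by (rule sum.reindex_bij_betw[OF bijpi])
    finally show ?thesis .
  qed
  have WW: "(\<Sum>v\<in>W. \<Sum>w\<in>W. g v w) = 0"
    unfolding g_def by (simp add: sum_subtractf WWsum)

  have OW1: "(\<Sum>w\<in>W. g v w) = sg v * (J (D1 v) - J (D2 v)) * (S2 - S1)" if v: "v \<in> Ob" for v
  proof -
    have vL: "v \<in> L" "v \<notin> U1'" "v \<notin> U2'" using v unfolding Ob_def W_def by auto
    have "(\<Sum>w\<in>U1'. g v w) = (\<Sum>w\<in>U1'. J (D1 v) * sg v * (sg' w - sg w))"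
    proof (rule sum.cong[OF refl])
      fix w assume w: "w \<in> U1'"
      have "hdist N n v w = D1 v" unfolding D1_def using far1[OF vL(1,2) w x1] .
      then show "g v w = J (D1 v) * sg v * (sg' w - sg w)" unfolding g_def using outO[OF v] by (simp add: algebra_simps)
    qed
    also have "\<dots> = J (D1 v) * sg v * ((\<Sum>w\<in>U1'. sg' w) - (\<Sum>w\<in>U1'. sg w))"
      by (simp only: sum_distrib_left[symmetric] sum_subtractf)
    also have "\<dots> = J (D1 v) * sg v * (S2 - S1)" unfolding sumU1' S1_def ..
    finally have e1: "(\<Sum>w\<in>U1'. g v w) = J (D1 v) * sg v * (S2 - S1)" .
    have "(\<Sum>w\<in>U2'. g v w) = (\<Sum>w\<in>U2'. J (D2 v) * sg v * (sg' w - sg w))"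
    proof (rule sum.cong[OF refl])
      fix w assume w: "w \<in> U2'"
      have "hdist N n v w = D2 v" unfolding D2_def using far2[OF vL(1,3) w x2] .
      then show "g v w = J (D2 v) * sg v * (sg' w - sg w)" unfolding g_def using outO[OF v] by (simp add: algebra_simps)
    qed
    also have "\<dots> = J (D2 v) * sg v * ((\<Sum>w\<in>U2'. sg' w) - (\<Sum>w\<in>U2'. sg w))"
      by (simp only: sum_distrib_left[symmetric] sum_subtractf)
    also have "\<dots> = J (D2 v) * sg v * (S1 - S2)" unfolding sumU2' S2_def ..
    finally have e2: "(\<Sum>w\<in>U2'. g v w) = J (D2 v) * sg v * (S1 - S2)" .
    show ?thesis unfolding sumW e1 e2 by (simp add: algebra_simps)
  qed

  define T1 where "T1 = (\<Sum>v\<in>U1-U1'. sg v * (J (D1 v) - J (m+1)))"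
  define T2 where "T2 = (\<Sum>v\<in>U2-U2'. sg v * (J (D2 v) - J (m+1)))"
  have Osplit: "Ob = ((U1 - U1') \<union> (U2 - U2')) \<union> (L - (U1 \<union> U2))"
    unfolding Ob_def W_def using U1L U2L U1'sub U2'sub disj by blast
  have OFs: "(\<Sum>v\<in>Ob. sg v * (J (D1 v) - J (D2 v))) = T1 - T2"
  proof -
    have f: "finite (U1 - U1')" "finite (U2 - U2')" "finite (L - (U1 \<union> U2))"
      using finL U1L U2L by (auto intro: finite_subset)
    have "(\<Sum>v\<in>Ob. sg v * (J (D1 v) - J (D2 v))) =
        (\<Sum>v\<in>U1-U1'. sg v * (J (D1 v) - J (D2 v))) + (\<Sum>v\<in>U2-U2'. sg v * (J (D1 v) - J (D2 v)))
        + (\<Sum>v\<in>L - (U1 \<union> U2). sg v * (J (D1 v) - J (D2 v)))"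
    proof -
      have d1: "(U1 - U1') \<inter> (U2 - U2') = {}" using disj by blast
      have d2: "((U1 - U1') \<union> (U2 - U2')) \<inter> (L - (U1 \<union> U2)) = {}" by blast
      show ?thesis unfolding Osplit
        by (simp only: sum.union_disjoint[OF finite_UnI[OF f(1) f(2)] f(3) d2] sum.union_disjoint[OF f(1) f(2) d1])
    qed
    also have "(\<Sum>v\<in>U1-U1'. sg v * (J (D1 v) - J (D2 v))) = T1"
      unfolding T1_def D2_def using crossD x2 U2'sub by (intro sum.cong refl) auto
    also have "(\<Sum>v\<in>U2-U2'. sg v * (J (D1 v) - J (D2 v))) = (\<Sum>v\<in>U2-U2'. - (sg v * (J (D2 v) - J (m+1))))"
    proof (rule sum.cong[OF refl])
      fix v assume "v \<in> U2 - U2'"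
      then have "D1 v = m + 1" unfolding D1_def using crossD[of x1 v] x1 U1'sub hdist_sym by (metis DiffD1 subsetD)
      then show "sg v * (J (D1 v) - J (D2 v)) = - (sg v * (J (D2 v) - J (m+1)))" by (simp add: algebra_simps)
    qed
    also have "\<dots> = - T2" unfolding T2_def by (rule sum_negf)
    also have "(\<Sum>v\<in>L - (U1 \<union> U2). sg v * (J (D1 v) - J (D2 v))) = 0"
    proof (rule sum.neutral, rule ballI)
      fix v assume "v \<in> L - (U1 \<union> U2)"
      then have "D1 v = D2 v" unfolding D1_def D2_def using far12 x1 x2 U1'sub U2'sub by blast
      then show "sg v * (J (D1 v) - J (D2 v)) = 0" by simp
    qed
    finally show ?thesis by simp
  qed

  define cA where "cA i = real (card {x \<in> U1. \<sigma> x = -1 \<and> x \<notin> U1' \<and> (\<forall>v \<in> U1'. hdist N n x v = i)})" for i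
  define cC where "cC i = real (card {x \<in> U2. \<sigma> x = -1 \<and> x \<notin> U2' \<and> (\<forall>v \<in> U2'. hdist N n x v = i)})" for i
  have T1f: "T1 = (\<Sum>i=k+1..m. (J i - J (m+1)) * (real (N^i - N^(i-1)) - 2 * cA i))"
    unfolding T1_def sg_def D1_def cA_def
    by (rule T_formula[OF N0 mU1 mU1' U1'sub _ x1 mnn]) (use U1L spinL in \<open>auto simp: L_def\<close>)
  have T2f: "T2 = (\<Sum>i=k+1..m. (J i - J (m+1)) * (real (N^i - N^(i-1)) - 2 * cC i))"
    unfolding T2_def sg_def D2_def cC_def
    by (rule T_formula[OF N0 mU2 mU2' U2'sub _ x2 mnn]) (use U2L spinL in \<open>auto simp: L_def\<close>)
  have TT: "T1 - T2 = -2 * (\<Sum>i=k+1..m. (J i - J (m+1)) * (cA i - cC i))"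
    unfolding T1f T2f sum_subtractf[symmetric] sum_distrib_left by (rule sum.cong) (simp_all add: algebra_simps)

  define P1 where "P1 = real (card {v \<in> U1'. \<sigma> v = 1})"
  define P2 where "P2 = real (card {v \<in> U2'. \<sigma> v = 1})"
  have cardeq: "card U1' = card U2'" by (rule bij_betw_same_card[OF bij])
  have S1f: "S1 = 2 * P1 - real (card U1')" unfolding S1_def sg_def P1_def
    by (rule spin_sum(2)) (use finW spinL U1'L in auto)
  have S2f: "S2 = 2 * P2 - real (card U2')" unfolding S2_def sg_def P2_def
    by (rule spin_sum(2)) (use finW spinL U2'L in auto)
  have SS: "S2 - S1 = 2 * (P2 - P1)" using S1f S2f cardeq by simp

  have OWtot: "(\<Sum>v\<in>Ob. \<Sum>w\<in>W. g v w) = (T1 - T2) * (S2 - S1)"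
  proof -
    have "(\<Sum>v\<in>Ob. \<Sum>w\<in>W. g v w) = (\<Sum>v\<in>Ob. sg v * (J (D1 v) - J (D2 v)) * (S2 - S1))"
      using OW1 by simp
    also have "\<dots> = (\<Sum>v\<in>Ob. sg v * (J (D1 v) - J (D2 v))) * (S2 - S1)" by (simp add: sum_distrib_right)
    finally show ?thesis unfolding OFs .
  qed

  have LHS: "hamiltonian N n J h \<sigma>' - hamiltonian N n J h \<sigma> = 2 * (P2 - P1) * (\<Sum>i=k+1..m. (J i - J (m+1)) * (cA i - cC i))"
    unfolding Hd PS split4 OO WW WO OWtot fld TT SS by (simp add: algebra_simps)
  have RHS: "(\<Sum>i = k+1..m. 2 * (J i - J (m+1)) * (cA i - cC i) * (P2 - P1)) =
      2 * (P2 - P1) * (\<Sum>i=k+1..m. (J i - J (m+1)) * (cA i - cC i))"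
    unfolding sum_distrib_left by (rule sum.cong) (simp_all add: algebra_simps)
  show ?thesis using LHS RHS unfolding cA_def cC_def P1_def P2_def by simp
qed

end
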